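(* Let $k_1,\dots,k_r$ be pairwise coprime odd integers with $k_i\ge 3$ for all $i$, such that $q=2k_1k_2\cdots k_r+1$ is a prime power. Then there exists a $\left(\frac{q-1}{2},\{k_1,\dots,k_r\}\right)$-MOHS.
   Context: Let $G$ be an abelian group of odd order $2v+1\ge 7$. A half-set of $G$ is a subset $V\subseteq G\setminus\{0\}$ containing exactly one element of each pair $\{g,-g\}$, $g\ne 0$ (so $|V|=v$). A $(v,k)$ Heffter system on $V$ is a partition of $V$ into blocks of size $k$, each block having sum $0$ in $G$. Two Heffter systems on the same half-set are orthogonal if every block of one meets every block of the other in at most one element. A $(v,\{k_1,\dots,k_r\})$-MOHS is a set $\{\mathcal P_1,\dots,\mathcal P_r\}$ of pairwise orthogonal Heffter systems on a common half-set of some abelian group of order $2v+1$, where $\mathcal P_i$ is a $(v,k_i)$ Heffter system. *)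

theory Defs
  imports "HOL-Algebra.Algebra" "HOL-Computational_Algebra.Primes"
begin

text \<open>Abelian groups are HOL-Algebra commutative groups, written multiplicatively:
  the group operation plays the role of +, \<one> of 0, inv of negation.\<close>

definition half_set :: "('a, 'b) monoid_scheme \<Rightarrow> 'a set \<Rightarrow> bool" where
  "half_set G V \<longleftrightarrow> V \<subseteq> carrier G - {\<one>\<^bsub>G\<^esub>} \<and>
     (\<forall>g \<in> carrier G - {\<one>\<^bsub>G\<^esub>}. (g \<in> V \<longleftrightarrow> inv\<^bsub>G\<^esub> g \<notin> V))"

definition heffter_system :: "('a, 'b) monoid_scheme \<Rightarrow> 'a set \<Rightarrow> nat \<Rightarrow> 'a set set \<Rightarrow> bool" where
  "heffter_system G V k P \<longleftrightarrow>
     \<Union>P = V \<and>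
     (\<forall>B \<in> P. B \<noteq> {} \<and> card B = k \<and> finprod G (\<lambda>x. x) B = \<one>\<^bsub>G\<^esub>) \<and>
     (\<forall>A \<in> P. \<forall>B \<in> P. A \<noteq> B \<longrightarrow> A \<inter> B = {})"

definition orthogonal_systems :: "'a set set \<Rightarrow> 'a set set \<Rightarrow> bool" where
  "orthogonal_systems P Q \<longleftrightarrow> (\<forall>A \<in> P. \<forall>B \<in> Q. card (A \<inter> B) \<le> 1)"

text \<open>A (v, {k_1,...,k_r})-MOHS: pairwise orthogonal Heffter systems P_i (i < r),
  P_i a (v,k_i) Heffter system, on a common half-set of an abelian group of order 2v+1.
  Groups are taken with carrier of type nat, which is no loss since every finite group
  is isomorphic to one on natural numbers.\<close>

definition exists_MOHS :: "nat \<Rightarrow> nat list \<Rightarrow> bool" where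
  "exists_MOHS v ks \<longleftrightarrow>
     (\<exists>(G :: nat monoid) V Ps.
        comm_group G \<and> finite (carrier G) \<and> order G = 2 * v + 1 \<and>
        half_set G V \<and> length Ps = length ks \<and>
        (\<forall>i < length ks. heffter_system G V (ks ! i) (Ps ! i)) \<and>
        (\<forall>i < length ks. \<forall>j < length ks. i \<noteq> j \<longrightarrow> orthogonal_systems (Ps ! i) (Ps ! j)))"

end

theory Submission
  imports Defs "HOL-Number_Theory.Residues"
begin

context cring
begin

lemma binomial_cring:
  assumes x: "x \<in> carrier R" and y: "y \<in> carrier R"
  shows "(x \<oplus> y) [^] n = (\<Oplus>k\<in>{..n}. add_pow R (n choose k) (x [^] k \<otimes> y [^] (n - k)))"
proof (induction n)
  case 0
  then show ?case using x y by simp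
next
  case (Suc n)
  define U where "U = (\<lambda>k. add_pow R (n choose k) (x [^] k \<otimes> y [^] (Suc n - k)))"
  define W where "W = (\<lambda>k. add_pow R (if k = 0 then 0 else n choose (k - 1)) (x [^] k \<otimes> y [^] (Suc n - k)))"
  have U: "U \<in> A \<rightarrow> carrier R" for A unfolding U_def using x y by auto
  have W: "W \<in> A \<rightarrow> carrier R" for A unfolding W_def using x y by auto
  have T: "(\<lambda>k. add_pow R (n choose k) (x [^] k \<otimes> y [^] (n - k))) \<in> A \<rightarrow> carrier R" for A
    using x y by auto
  have "(x \<oplus> y) [^] Suc n = (x \<oplus> y) [^] n \<otimes> (x \<oplus> y)" by simp
  also have "\<dots> = (\<Oplus>k\<in>{..n}. add_pow R (n choose k) (x [^] k \<otimes> y [^] (n - k))) \<otimes> x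
      \<oplus> (\<Oplus>k\<in>{..n}. add_pow R (n choose k) (x [^] k \<otimes> y [^] (n - k))) \<otimes> y"
    using Suc x y T by (simp add: r_distr finsum_closed)
  also have "(\<Oplus>k\<in>{..n}. add_pow R (n choose k) (x [^] k \<otimes> y [^] (n - k))) \<otimes> y
      = (\<Oplus>k\<in>{..n}. U k)"
  proof -
    have "(\<Oplus>k\<in>{..n}. add_pow R (n choose k) (x [^] k \<otimes> y [^] (n - k))) \<otimes> y
       = (\<Oplus>k\<in>{..n}. add_pow R (n choose k) (x [^] k \<otimes> y [^] (n - k)) \<otimes> y)"
      using finsum_ldistr[of "{..n}" y] T y by simp
    also have "\<dots> = (\<Oplus>k\<in>{..n}. U k)"
    proof (rule finsum_cong')
      fix k assume k: "k \<in> {..n}"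
      have "add_pow R (n choose k) (x [^] k \<otimes> y [^] (n - k)) \<otimes> y = add_pow R (n choose k) (x [^] k \<otimes> y [^] (n - k) \<otimes> y)"
        using add_pow_ldistr x y by simp
      also have "x [^] k \<otimes> y [^] (n - k) \<otimes> y = x [^] k \<otimes> y [^] (Suc n - k)"
        using k x y by (simp add: m_assoc Suc_diff_le)
      finally show "add_pow R (n choose k) (x [^] k \<otimes> y [^] (n - k)) \<otimes> y = U k" unfolding U_def .
    qed (use U in auto)
    finally show ?thesis .
  qed
  also have "(\<Oplus>k\<in>{..n}. add_pow R (n choose k) (x [^] k \<otimes> y [^] (n - k))) \<otimes> x
      = (\<Oplus>k\<in>{..n}. W (Suc k))"
  proof -
    have "(\<Oplus>k\<in>{..n}. add_pow R (n choose k) (x [^] k \<otimes> y [^] (n - k))) \<otimes> x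
       = (\<Oplus>k\<in>{..n}. add_pow R (n choose k) (x [^] k \<otimes> y [^] (n - k)) \<otimes> x)"
      using finsum_ldistr[of "{..n}" x] T x by simp
    also have "\<dots> = (\<Oplus>k\<in>{..n}. W (Suc k))"
    proof (rule finsum_cong')
      fix k assume k: "k \<in> {..n}"
      have "add_pow R (n choose k) (x [^] k \<otimes> y [^] (n - k)) \<otimes> x = add_pow R (n choose k) (x [^] k \<otimes> y [^] (n - k) \<otimes> x)"
        using add_pow_ldistr x y by simp
      also have "x [^] k \<otimes> y [^] (n - k) \<otimes> x = x [^] Suc k \<otimes> y [^] (Suc n - Suc k)"
        using k x y by (simp add: m_ac)
      finally show "add_pow R (n choose k) (x [^] k \<otimes> y [^] (n - k)) \<otimes> x = W (Suc k)" unfolding W_def by simp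
    qed (use W in auto)
    finally show ?thesis .
  qed
  also have "(\<Oplus>k\<in>{..n}. W (Suc k)) = (\<Oplus>k\<in>{..Suc n}. W k)"
  proof -
    have W0: "W 0 = \<zero>" by (simp add: W_def)
    have c: "(\<Oplus>k\<in>{..n}. W (Suc k)) \<in> carrier R" by (rule finsum_closed) (use W in auto)
    show ?thesis by (subst finsum_Suc2[OF W]) (simp add: W0 c)
  qed
  also have "(\<Oplus>k\<in>{..n}. U k) = (\<Oplus>k\<in>{..Suc n}. U k)"
  proof -
    have U0: "U (Suc n) = \<zero>" by (simp add: U_def binomial_eq_0)
    have c: "(\<Oplus>k\<in>{..n}. U k) \<in> carrier R" by (rule finsum_closed) (use U in auto)
    show ?thesis by (subst finsum_Suc[OF U]) (simp add: U0 c)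
  qed
  also have "(\<Oplus>k\<in>{..Suc n}. W k) \<oplus> (\<Oplus>k\<in>{..Suc n}. U k) = (\<Oplus>k\<in>{..Suc n}. W k \<oplus> U k)"
    using finsum_addf[of W "{..Suc n}" U] U W by simp
  also have "\<dots> = (\<Oplus>k\<in>{..Suc n}. add_pow R (Suc n choose k) (x [^] k \<otimes> y [^] (Suc n - k)))"
  proof (rule finsum_cong')
    fix k assume k: "k \<in> {..Suc n}"
    have "(Suc n choose k) = (if k = 0 then 0 else n choose (k - 1)) + (n choose k)"
      by (cases k) auto
    then show "W k \<oplus> U k = add_pow R (Suc n choose k) (x [^] k \<otimes> y [^] (Suc n - k))"
      unfolding W_def U_def using x y by (simp add: add.nat_pow_mult)
  qed (use x y in auto)
  finally show ?case .
qed

lemma add_pow_one_mult: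
  assumes "z \<in> carrier R" shows "add_pow R (m::nat) z = (add_pow R m \<one>) \<otimes> z"
  using add_pow_ldistr[of \<one> z m] assms by simp

lemma frobenius_prime:
  assumes x: "x \<in> carrier R" and y: "y \<in> carrier R"
    and p: "Factorial_Ring.prime (p::nat)" and char: "add_pow R p \<one> = \<zero>"
  shows "(x \<oplus> y) [^] p = x [^] p \<oplus> y [^] p"
proof -
  define f where "f = (\<lambda>k. add_pow R (p choose k) (x [^] k \<otimes> y [^] (p - k)))"
  have f: "f \<in> A \<rightarrow> carrier R" for A unfolding f_def using x y by auto
  have z: "f k = \<zero>" if "0 < k" "k < p" for k
  proof -
    have "p dvd (p choose k)"
      by (rule dvd_choose_prime) (use that p in auto)
    then obtain m where m: "p choose k = p * m" by (auto elim: dvdE)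
    have c: "x [^] k \<otimes> y [^] (p - k) \<in> carrier R" using x y by simp
    have "f k = (add_pow R (p choose k) \<one>) \<otimes> (x [^] k \<otimes> y [^] (p - k))"
      unfolding f_def by (rule add_pow_one_mult[OF c])
    also have "add_pow R (p choose k) \<one> = add_pow R m (add_pow R p \<one>)"
      unfolding m by (rule add.nat_pow_pow[symmetric]) simp
    also have "\<dots> = \<zero>" unfolding char by (rule add.nat_pow_one)
    finally show ?thesis using c by (simp only: l_null)
  qed
  obtain m where pm: "p = Suc m" using p by (cases p) auto
  have "(x \<oplus> y) [^] p = (\<Oplus>k\<in>{..p}. f k)" unfolding f_def by (rule binomial_cring[OF x y])
  also have "\<dots> = f p \<oplus> (\<Oplus>k\<in>{..m}. f k)" unfolding pm by (rule finsum_Suc) (rule f)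
  also have "(\<Oplus>k\<in>{..m}. f k) = f 0 \<oplus> (\<Oplus>k\<in>{Suc 0..m}. f k)"
    by (rule add.finprod_0'[symmetric]) (rule f)
  also have "(\<Oplus>k\<in>{Suc 0..m}. f k) = (\<Oplus>k\<in>{Suc 0..m}. \<zero>)"
    by (rule finsum_cong') (use z pm f in auto)
  also have "(\<Oplus>k\<in>{Suc 0..m}. \<zero>) = \<zero>" by (rule finsum_zero)
  also have "f p = x [^] p" unfolding f_def using x y by simp
  also have "f 0 = y [^] p" unfolding f_def using x y by simp
  finally show ?thesis using x y by (simp only: r_zero nat_pow_closed)
qed

lemma frobenius_power:
  assumes x: "x \<in> carrier R" and y: "y \<in> carrier R"
    and p: "Factorial_Ring.prime (p::nat)" and char: "add_pow R p \<one> = \<zero>"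
  shows "(x \<oplus> y) [^] (p ^ n) = x [^] (p ^ n) \<oplus> y [^] (p ^ n)"
proof (induction n)
  case 0
  show ?case using x y by simp
next
  case (Suc n)
  have e: "p ^ Suc n = p ^ n * p" by (rule power_Suc2)
  have "(x \<oplus> y) [^] (p ^ Suc n) = ((x \<oplus> y) [^] (p ^ n)) [^] p"
    unfolding e by (rule nat_pow_pow[symmetric]) (use x y in simp)
  also have "\<dots> = (x [^] (p ^ n) \<oplus> y [^] (p ^ n)) [^] p" by (simp only: Suc)
  also have "\<dots> = (x [^] (p ^ n)) [^] p \<oplus> (y [^] (p ^ n)) [^] p"
    by (rule frobenius_prime) (use x y p char in auto)
  also have "\<dots> = x [^] (p ^ Suc n) \<oplus> y [^] (p ^ Suc n)"
    unfolding e using x y by (simp only: nat_pow_pow)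
  finally show ?case .
qed

end

primrec geo :: "('a, 'b) ring_scheme \<Rightarrow> 'a \<Rightarrow> 'a \<Rightarrow> nat \<Rightarrow> 'a" where
  "geo R x c 0 = \<zero>\<^bsub>R\<^esub>"
| "geo R x c (Suc n) = x \<otimes>\<^bsub>R\<^esub> geo R x c n \<oplus>\<^bsub>R\<^esub> c [^]\<^bsub>R\<^esub> n"

context cring
begin

lemma geo_closed: "x \<in> carrier R \<Longrightarrow> c \<in> carrier R \<Longrightarrow> geo R x c n \<in> carrier R"
  by (induction n) auto

lemma geo_factor:
  assumes x: "x \<in> carrier R" and c: "c \<in> carrier R"
  shows "x [^] n \<ominus> c [^] n = (x \<ominus> c) \<otimes> geo R x c n"
proof (induction n)
  case 0 then show ?case using x c by (simp add: r_neg)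
next
  case (Suc n)
  have g: "geo R x c n \<in> carrier R" using geo_closed x c .
  have xn: "x [^] n \<in> carrier R" and cn: "c [^] n \<in> carrier R" using x c by auto
  have "(x \<ominus> c) \<otimes> geo R x c (Suc n) = x \<otimes> ((x \<ominus> c) \<otimes> geo R x c n) \<oplus> (x \<ominus> c) \<otimes> c [^] n"
    unfolding geo.simps using x c g cn by algebra
  also have "\<dots> = x \<otimes> (x [^] n \<ominus> c [^] n) \<oplus> (x \<ominus> c) \<otimes> c [^] n" using Suc by simp
  also have "\<dots> = x [^] n \<otimes> x \<ominus> c [^] n \<otimes> c"
    using x c xn cn by algebra
  finally show ?case by simp
qed

lemma geo_same:
  assumes a: "a \<in> carrier R"
  shows "geo R a a (Suc n) = add_pow R (Suc n) (a [^] n)"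
proof (induction n)
  case 0 then show ?case using a by simp
next
  case (Suc n)
  have "geo R a a (Suc (Suc n)) = a \<otimes> add_pow R (Suc n) (a [^] n) \<oplus> a [^] Suc n"
    using Suc by simp
  also have "a \<otimes> add_pow R (Suc n) (a [^] n) = add_pow R (Suc n) (a \<otimes> a [^] n)"
    by (rule add_pow_rdistr) (use a in auto)
  also have "a \<otimes> a [^] n = a [^] Suc n" using a by (simp add: m_comm)
  finally show ?case using a by (simp add: add.nat_pow_Suc)
qed

end

lemma (in domain) pow_nz: "a \<in> carrier R \<Longrightarrow> a \<noteq> \<zero> \<Longrightarrow> a [^] (n::nat) \<noteq> \<zero>"
  by (induction n) (auto simp: integral_iff)

lemma (in ring_hom_cring) hom_geo:
  assumes "x \<in> carrier R" "c \<in> carrier R"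
  shows "h (geo R x c n) = geo S (h x) (h c) n"
  using assms by (induction n) (auto simp: R.geo_closed)

context algebraically_closed
begin

abbreviation "PL \<equiv> poly_ring L"

lemma PL_domain: "domain PL"
  using univ_poly_is_domain[OF carrier_is_subring] .

lemma eval_hom_PL: "x \<in> carrier L \<Longrightarrow> ring_hom_cring PL L (\<lambda>p. eval p x)"
  using eval_cring_hom[OF carrier_is_subring] by simp

lemma const_poly_pow:
  assumes "a \<in> carrier L" "a \<noteq> \<zero>"
  shows "[a] [^]\<^bsub>PL\<^esub> (n::nat) = [a [^] n]"
proof (induction n)
  case 0 then show ?case by (simp add: univ_poly_one)
next
  case (Suc n)
  have "a [^] n \<noteq> \<zero>" using assms by (simp add: pow_nz)
  then have "[a [^] n] \<otimes>\<^bsub>PL\<^esub> [a] = [a [^] n \<otimes> a]"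
    using assms poly_mult_const'(1)[of "[a]" "a [^] n"] integral_iff
    by (simp add: univ_poly_mult m_comm)
  then show ?case using Suc by simp
qed

lemma roots_of_unity_card:
  assumes N: "N > 0" and charN: "add_pow L N \<one> \<noteq> \<zero>"
  shows "finite {x \<in> carrier L. x [^] N = \<one>}" "card {x \<in> carrier L. x [^] N = \<one>} = N"
proof -
  interpret P: domain PL by (rule PL_domain)
  define f where "f = X [^]\<^bsub>PL\<^esub> N \<ominus>\<^bsub>PL\<^esub> \<one>\<^bsub>PL\<^esub>"
  have Xc: "X \<in> carrier PL" using var_closed(1)[OF carrier_is_subring] .
  have fc: "f \<in> carrier PL" unfolding f_def using Xc by simp
  have evalf: "eval f x = x [^] N \<ominus> \<one>" if x: "x \<in> carrier L" for x
  proof -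
    interpret h: ring_hom_cring PL L "\<lambda>p. eval p x" using eval_hom_PL[OF x] .
    show ?thesis unfolding f_def using Xc x eval_var[OF x] by (simp add: a_minus_def a_minus_def)
  qed
  have XN: "X [^]\<^bsub>PL\<^esub> N = \<one> # replicate N \<zero>"
    using unitary_monom_eq_var_pow[OF carrier_is_subring, of N] by (simp add: monom_def)
  have m1: "\<ominus>\<^bsub>PL\<^esub> \<one>\<^bsub>PL\<^esub> = [\<ominus> \<one>]"
    using univ_poly_a_inv_def'[OF carrier_is_subring P.one_closed] by (simp add: univ_poly_one)
  have degf: "degree f = N"
  proof -
    have "f = poly_add (\<one> # replicate N \<zero>) [\<ominus> \<one>]"
      unfolding f_def a_minus_def XN m1 by (simp add: univ_poly_add)
    also have "degree \<dots> = max (degree (\<one> # replicate N \<zero>)) (degree [\<ominus> \<one>])"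
      by (rule poly_add_degree_eq[OF carrier_is_subring]) (use N in \<open>auto simp: polynomial_def\<close>)
    finally show ?thesis by simp
  qed
  have fne: "f \<noteq> []" using degf N by auto
  have split: "size (roots f) = N"
    using roots_over_carrier[OF fc] degf unfolding splitted_def by simp
  have memroots: "x \<in># roots f \<longleftrightarrow> x \<in> carrier L \<and> x [^] N = \<one>" for x
  proof -
    have "x \<in># roots f \<longleftrightarrow> is_root f x" using roots_mem_iff_is_root[OF fc] .
    also have "\<dots> \<longleftrightarrow> x \<in> carrier L \<and> x [^] N = \<one>"
      unfolding is_root_def using evalf fne by (auto simp: r_right_minus_eq)
    finally show ?thesis .
  qed
  have cnt: "count (roots f) a \<le> 1" for a
  proof (rule ccontr)
    assume H: "\<not> count (roots f) a \<le> 1"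
    then have am: "alg_mult f a \<ge> 2" using alg_mult_eq_count_roots[OF fc] by simp
    from H have "a \<in># roots f" by (metis le0 not_in_iff)
    then have a: "a \<in> carrier L" and aN: "a [^] N = \<one>" using memroots by auto
    have a0: "a \<noteq> \<zero>" using aN N by (auto simp: nat_pow_zero)
    define c where "c = [a]"
    have cc: "c \<in> carrier PL" using a a0 unfolding c_def by (simp add: univ_poly_carrier[symmetric] polynomial_def)
    define d where "d = [\<one>, \<ominus> a]"
    have d_eq: "d = X \<ominus>\<^bsub>PL\<^esub> c"
    proof -
      have "\<ominus>\<^bsub>PL\<^esub> c = [\<ominus> a]" using univ_poly_a_inv_def'[OF carrier_is_subring cc] by (simp add: c_def)
      then show ?thesis unfolding a_minus_def d_def by (simp add: univ_poly_add var_def a)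
    qed
    have dc: "d \<in> carrier PL" unfolding d_eq using Xc cc by simp
    have d0: "d \<noteq> \<zero>\<^bsub>PL\<^esub>" by (simp add: d_def univ_poly_zero)
    have cN: "c [^]\<^bsub>PL\<^esub> N = \<one>\<^bsub>PL\<^esub>" unfolding c_def using const_poly_pow[OF a a0] aN by (simp add: univ_poly_one)
    define hh where "hh = geo PL X c N"
    have hc: "hh \<in> carrier PL" unfolding hh_def using P.geo_closed Xc cc by simp
    have fdh: "f = d \<otimes>\<^bsub>PL\<^esub> hh"
      unfolding f_def hh_def d_eq using P.geo_factor[OF Xc cc, of N] cN by simp
    have "(d [^]\<^bsub>PL\<^esub> (2::nat)) pdivides f"
      using le_alg_mult_imp_pdivides[OF a fc] am unfolding d_def by simp
    then obtain g where gc: "g \<in> carrier PL" and fg: "f = d [^]\<^bsub>PL\<^esub> (2::nat) \<otimes>\<^bsub>PL\<^esub> g"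
      unfolding pdivides_def factor_def by auto
    have "d \<otimes>\<^bsub>PL\<^esub> hh = d \<otimes>\<^bsub>PL\<^esub> (d \<otimes>\<^bsub>PL\<^esub> g)"
      using fdh fg dc gc by (simp add: numeral_2_eq_2 P.m_assoc)
    then have hdg: "hh = d \<otimes>\<^bsub>PL\<^esub> g"
      using P.m_lcancel[OF d0 dc hc] dc gc by simp
    interpret h: ring_hom_cring PL L "\<lambda>p. eval p a" using eval_hom_PL[OF a] .
    have "eval d a = \<zero>" unfolding d_eq using Xc cc a eval_var[OF a]
      by (simp add: a_minus_def a_minus_def c_def r_neg)
    then have "eval hh a = \<zero>" unfolding hdg using dc gc a by (simp add: eval_in_carrier)
    moreover have "eval hh a = geo L a a N"
      unfolding hh_def using h.hom_geo[OF Xc cc] eval_var[OF a] a by (simp add: c_def)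
    moreover obtain M where NM: "N = Suc M" using N by (cases N) auto
    have "geo L a a N = add_pow L N \<one> \<otimes> a [^] M"
    proof -
      have "geo L a a (Suc M) = add_pow L (Suc M) (a [^] M)" by (rule geo_same[OF a])
      also have "\<dots> = add_pow L (Suc M) \<one> \<otimes> a [^] M" by (rule add_pow_one_mult) (use a in simp)
      finally show ?thesis unfolding NM .
    qed
    moreover have "add_pow L N \<one> \<otimes> a [^] M \<noteq> \<zero>"
      using charN a a0 by (simp add: integral_iff pow_nz)
    ultimately show False by simp
  qed
  have "set_mset (roots f) = {x \<in> carrier L. x [^] N = \<one>}" using memroots by auto
  moreover have "size (roots f) = card (set_mset (roots f))"
  proof -
    have "roots f = mset_set (set_mset (roots f))"
    proof (rule multiset_eqI)
      fix x
      show "count (roots f) x = count (mset_set (set_mset (roots f))) x"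
      proof (cases "x \<in># roots f")
        case True
        then have "count (roots f) x > 0" by simp
        then have "count (roots f) x = 1" using cnt[of x] by linarith
        then show ?thesis using True by simp
      next
        case False
        then show ?thesis by (simp add: not_in_iff)
      qed
    qed
    then show ?thesis by (metis size_mset_set)
  qed
  ultimately show "card {x \<in> carrier L. x [^] N = \<one>} = N" "finite {x \<in> carrier L. x [^] N = \<one>}"
    using split by (metis finite_set_mset)+
qed

end

lemma (in ring) transport_group:
  assumes SR: "S \<subseteq> carrier R" and fin: "finite S" and z: "\<zero> \<in> S"
    and add: "\<And>x y. x \<in> S \<Longrightarrow> y \<in> S \<Longrightarrow> x \<oplus> y \<in> S"
    and neg: "\<And>x. x \<in> S \<Longrightarrow> \<ominus> x \<in> S"
  obtains G :: "nat monoid" and \<phi> where "comm_group G" "carrier G = {0..<card S}"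
    "bij_betw \<phi> (carrier G) S"
    "\<And>a b. a \<in> carrier G \<Longrightarrow> b \<in> carrier G \<Longrightarrow> \<phi> (a \<otimes>\<^bsub>G\<^esub> b) = \<phi> a \<oplus> \<phi> b"
    "\<phi> \<one>\<^bsub>G\<^esub> = \<zero>"
proof -
  obtain \<phi> where bij: "bij_betw \<phi> {0..<card S} S" using ex_bij_betw_nat_finite[OF fin] by blast
  define \<psi> where "\<psi> = inv_into {0..<card S} \<phi>"
  have \<phi>\<psi>: "\<phi> (\<psi> s) = s" if "s \<in> S" for s
    unfolding \<psi>_def using bij that by (simp add: bij_betw_inv_into_right)
  have \<psi>\<phi>: "\<psi> (\<phi> a) = a" if "a \<in> {0..<card S}" for a
    unfolding \<psi>_def using bij that by (simp add: bij_betw_inv_into_left)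
  have \<psi>S: "\<psi> s \<in> {0..<card S}" if "s \<in> S" for s
    unfolding \<psi>_def using bij that by (meson bij_betw_apply bij_betw_inv_into)
  have \<phi>S: "\<phi> a \<in> S" if "a \<in> {0..<card S}" for a using bij that by (meson bij_betw_apply)
  have SC: "s \<in> carrier R" if "s \<in> S" for s using SR that by auto
  define G :: "nat monoid" where "G = \<lparr>carrier = {0..<card S}, monoid.mult = (\<lambda>a b. \<psi> (\<phi> a \<oplus> \<phi> b)), one = \<psi> \<zero>\<rparr>"
  have cG: "carrier G = {0..<card S}" unfolding G_def by simp
  have mG: "a \<otimes>\<^bsub>G\<^esub> b = \<psi> (\<phi> a \<oplus> \<phi> b)" for a b unfolding G_def by simp
  have oG: "\<one>\<^bsub>G\<^esub> = \<psi> \<zero>" unfolding G_def by simp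
  have "comm_group G"
  proof (rule comm_groupI)
    fix x y assume "x \<in> carrier G" "y \<in> carrier G"
    then show "x \<otimes>\<^bsub>G\<^esub> y \<in> carrier G" unfolding cG mG using \<psi>S add \<phi>S by auto
  next
    show "\<one>\<^bsub>G\<^esub> \<in> carrier G" unfolding cG oG using \<psi>S z by auto
  next
    fix x y w assume "x \<in> carrier G" "y \<in> carrier G" "w \<in> carrier G"
    then show "x \<otimes>\<^bsub>G\<^esub> y \<otimes>\<^bsub>G\<^esub> w = x \<otimes>\<^bsub>G\<^esub> (y \<otimes>\<^bsub>G\<^esub> w)"
      unfolding cG mG using \<phi>\<psi> add \<phi>S SC by (simp add: a_assoc)
  next
    fix x y assume "x \<in> carrier G" "y \<in> carrier G"
    then show "x \<otimes>\<^bsub>G\<^esub> y = y \<otimes>\<^bsub>G\<^esub> x" unfolding cG mG using \<phi>S SC by (simp add: a_comm)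
  next
    fix x assume "x \<in> carrier G"
    then show "\<one>\<^bsub>G\<^esub> \<otimes>\<^bsub>G\<^esub> x = x" unfolding cG mG oG using \<phi>\<psi> z \<phi>S SC \<psi>\<phi> by simp
  next
    fix x assume x: "x \<in> carrier G"
    show "\<exists>y\<in>carrier G. y \<otimes>\<^bsub>G\<^esub> x = \<one>\<^bsub>G\<^esub>"
    proof (intro bexI)
      show "\<psi> (\<ominus> \<phi> x) \<otimes>\<^bsub>G\<^esub> x = \<one>\<^bsub>G\<^esub>" unfolding mG oG using x cG \<phi>\<psi> neg \<phi>S SC by (simp add: l_neg)
      show "\<psi> (\<ominus> \<phi> x) \<in> carrier G" unfolding cG using x cG \<psi>S neg \<phi>S by simp
    qed
  qed
  moreover have "bij_betw \<phi> (carrier G) S" using bij cG by simp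
  moreover have "\<phi> (a \<otimes>\<^bsub>G\<^esub> b) = \<phi> a \<oplus> \<phi> b" if "a \<in> carrier G" "b \<in> carrier G" for a b
    unfolding mG using that cG \<phi>\<psi> add \<phi>S by simp
  moreover have "\<phi> \<one>\<^bsub>G\<^esub> = \<zero>" unfolding oG using \<phi>\<psi> z by simp
  ultimately show ?thesis using that cG by blast
qed

lemma (in ring) transport_facts:
  fixes G :: "('g, 'h) monoid_scheme"
  assumes G: "comm_group G" and bij: "bij_betw \<phi> (carrier G) S" and SR: "S \<subseteq> carrier R"
    and hom: "\<And>a b. a \<in> carrier G \<Longrightarrow> b \<in> carrier G \<Longrightarrow> \<phi> (a \<otimes>\<^bsub>G\<^esub> b) = \<phi> a \<oplus> \<phi> b"
    and one: "\<phi> \<one>\<^bsub>G\<^esub> = \<zero>"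
  shows "\<And>a. a \<in> carrier G \<Longrightarrow> \<phi> (inv\<^bsub>G\<^esub> a) = \<ominus> \<phi> a"
    and "\<And>B. B \<subseteq> carrier G \<Longrightarrow> finite B \<Longrightarrow> \<phi> (finprod G (\<lambda>x. x) B) = (\<Oplus>x\<in>B. \<phi> x)"
proof -
  interpret G: comm_group G by (rule G)
  have \<phi>C: "\<phi> a \<in> carrier R" if "a \<in> carrier G" for a using bij SR that by (meson bij_betw_apply subsetD)
  show "\<phi> (inv\<^bsub>G\<^esub> a) = \<ominus> \<phi> a" if a: "a \<in> carrier G" for a
  proof -
    have "\<phi> (inv\<^bsub>G\<^esub> a) \<oplus> \<phi> a = \<zero>" using hom[of "inv\<^bsub>G\<^esub> a" a] a one by simp
    then show ?thesis using a \<phi>C by (metis G.inv_closed a_comm add.inv_equality minus_equality)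
  qed
  show "\<phi> (finprod G (\<lambda>x. x) B) = (\<Oplus>x\<in>B. \<phi> x)" if "B \<subseteq> carrier G" "finite B" for B
    using that(2,1)
  proof (induction B rule: finite_induct)
    case empty then show ?case using one by simp
  next
    case (insert b B)
    have "finprod G (\<lambda>x. x) (insert b B) = b \<otimes>\<^bsub>G\<^esub> finprod G (\<lambda>x. x) B"
      using insert by (intro G.finprod_insert) auto
    moreover have fc: "finprod G (\<lambda>x. x) B \<in> carrier G" by (rule G.finprod_closed) (use insert in auto)
    ultimately have "\<phi> (finprod G (\<lambda>x. x) (insert b B)) = \<phi> b \<oplus> \<phi> (finprod G (\<lambda>x. x) B)"
      using hom[OF _ fc] insert by simp
    also have "\<dots> = \<phi> b \<oplus> (\<Oplus>x\<in>B. \<phi> x)" using insert by simp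
    also have "\<dots> = (\<Oplus>x\<in>insert b B. \<phi> x)" using insert \<phi>C by (subst finsum_insert) auto
    finally show ?case .
  qed
qed

lemma prod_list_odd: "(\<forall>x\<in>set xs. odd (x::nat)) \<Longrightarrow> odd (prod_list xs)"
  by (induction xs) auto

lemma dvd_prod_list_mem: "(x::nat) \<in> set xs \<Longrightarrow> x dvd prod_list xs"
  by (induction xs) auto

lemma (in cring) neg_pow:
  assumes x: "x \<in> carrier R"
  shows "(\<ominus> x) [^] (n::nat) = (if even n then x [^] n else \<ominus> (x [^] n))"
  by (induction n) (auto simp: x l_minus r_minus)

locale mohs = algebraically_closed L for L (structure) +
  fixes p e K :: nat
  assumes p: "Factorial_Ring.prime p" and char: "add_pow L p \<one> = \<zero>"
    and q: "2 * K + 1 = p ^ e" and Kodd: "odd K" and Kpos: "K > 0"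
begin

definition "muL N = {x \<in> carrier L. x [^] (N::nat) = \<one>}"
definition "SL = {x \<in> carrier L. x [^] (p ^ e) = x}"
definition "cosL k x = {z \<in> carrier L. z [^] k = x [^] (k::nat)}"
definition "blocksL k = cosL k ` muL K"

lemma cq: "add_pow L (p ^ e) \<one> = \<zero>"
proof -
  have "e \<noteq> 0" using q Kpos by (cases e) auto
  then have e: "p ^ e = p * p ^ (e - 1)" by (cases e) auto
  have "add_pow L (p ^ e) \<one> = add_pow L (p ^ (e - 1)) (add_pow L p \<one>)"
    unfolding e by (rule add.nat_pow_pow[symmetric]) simp
  also have "\<dots> = \<zero>" unfolding char by (rule add.nat_pow_one)
  finally show ?thesis .
qed

lemma c2K: "add_pow L (2 * K) \<one> = \<ominus> \<one>"
proof -
  have "add_pow L (2 * K) \<one> \<oplus> \<one> = add_pow L (Suc (2 * K)) \<one>"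
    by (simp add: add.nat_pow_Suc)
  also have "\<dots> = \<zero>" using cq q by simp
  finally have "add_pow L (2 * K) \<one> \<oplus> \<one> = \<zero>" .
  then have "\<ominus> \<one> = add_pow L (2 * K) \<one>" by (intro add.inv_equality) auto
  then show ?thesis by simp
qed

lemma nz: assumes "d dvd 2 * K" shows "add_pow L d \<one> \<noteq> \<zero>"
proof
  assume d0: "add_pow L d \<one> = \<zero>"
  obtain m where m: "2 * K = d * m" using assms by (auto elim: dvdE)
  have "add_pow L (2 * K) \<one> = add_pow L m (add_pow L d \<one>)"
    unfolding m by (rule add.nat_pow_pow[symmetric]) simp
  also have "\<dots> = \<zero>" unfolding d0 by (rule add.nat_pow_one)
  finally have h: "\<ominus> \<one> = \<zero>" using c2K by simp
  have "\<one> = \<ominus> (\<ominus> \<one>)" by simp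
  also have "\<dots> = \<zero>" unfolding h by simp
  finally show False by simp
qed

lemma one_ne_neg: "\<one> \<noteq> \<ominus> \<one>"
proof
  assume h: "\<one> = \<ominus> \<one>"
  have "add_pow L (2::nat) \<one> = \<one> \<oplus> \<one>" by (simp add: numeral_2_eq_2)
  also have "\<dots> = \<zero>" using h by (metis one_closed r_neg)
  finally show False using nz[of 2] by simp
qed

lemma mu_card:
  assumes "k dvd 2 * K" "k > 0"
  shows "finite (muL k)" "card (muL k) = k"
  using roots_of_unity_card[OF assms(2) nz[OF assms(1)]] unfolding muL_def by auto

lemma mu_carrier: "muL N \<subseteq> carrier L" unfolding muL_def by auto

lemma mu_nz: "N > 0 \<Longrightarrow> \<zero> \<notin> muL N"
  unfolding muL_def using nat_pow_zero[of N] by auto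

lemma mu_mult: "x \<in> muL N \<Longrightarrow> y \<in> muL N \<Longrightarrow> x \<otimes> y \<in> muL N"
  unfolding muL_def by (auto simp: nat_pow_distrib)

lemma mu_one: "\<one> \<in> muL N" unfolding muL_def by simp

lemma S_eq: "SL = insert \<zero> (muL (2 * K))"
proof (rule Set.set_eqI)
  fix x
  show "x \<in> SL \<longleftrightarrow> x \<in> insert \<zero> (muL (2 * K))"
  proof (cases "x = \<zero>")
    case True
    have pe0: "p ^ e \<noteq> 0" using q by linarith
    have "\<zero> \<in> SL" unfolding SL_def using nat_pow_zero[OF pe0] by simp
    then show ?thesis using True by simp
  next
    case False
    have iff: "x \<in> carrier L \<Longrightarrow> (x [^] (2 * K) \<otimes> x = \<one> \<otimes> x) = (x [^] (2 * K) = \<one>)"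
      by (rule m_rcancel[OF False]) auto
    have pw: "x [^] (p ^ e) = x [^] (2 * K) \<otimes> x"
      by (simp only: q[symmetric] Suc_eq_plus1[symmetric] nat_pow_Suc)
    show ?thesis
    proof
      assume "x \<in> SL"
      then have xc: "x \<in> carrier L" and xq: "x [^] (p ^ e) = x" unfolding SL_def by auto
      have "x [^] (2 * K) \<otimes> x = \<one> \<otimes> x" using xq xc by (simp add: pw)
      then have "x [^] (2 * K) = \<one>" by (rule iff[OF xc, THEN iffD1])
      then show "x \<in> insert \<zero> (muL (2 * K))" using xc unfolding muL_def by simp
    next
      assume "x \<in> insert \<zero> (muL (2 * K))"
      then have xc: "x \<in> carrier L" and x2: "x [^] (2 * K) = \<one>" using False unfolding muL_def by auto
      then have "x [^] (p ^ e) = x" using pw by simp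
      then show "x \<in> SL" using xc unfolding SL_def by simp
    qed
  qed
qed

lemma S_fin: "finite SL" and S_card: "card SL = p ^ e"
proof -
  have f: "finite (muL (2 * K))" "card (muL (2 * K)) = 2 * K" using mu_card[of "2 * K"] Kpos by auto
  have "\<zero> \<notin> muL (2 * K)" using mu_nz Kpos by simp
  then show "finite SL" "card SL = p ^ e" unfolding S_eq using f q by auto
qed

lemma S_sub: "SL \<subseteq> carrier L" unfolding SL_def by auto
lemma S_zero: "\<zero> \<in> SL" unfolding S_eq by simp

lemma S_add: "x \<in> SL \<Longrightarrow> y \<in> SL \<Longrightarrow> x \<oplus> y \<in> SL"
  unfolding SL_def using frobenius_power[OF _ _ p char] by auto

lemma S_neg: "x \<in> SL \<Longrightarrow> \<ominus> x \<in> SL"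
proof -
  assume x: "x \<in> SL"
  have "odd (p ^ e)" using q[symmetric] by simp
  then show "\<ominus> x \<in> SL" using x unfolding SL_def by (auto simp: neg_pow)
qed

lemma mu_sub: assumes "k dvd N" shows "muL k \<subseteq> muL N"
proof
  fix x assume x: "x \<in> muL k"
  obtain m where m: "N = k * m" using assms by (auto elim: dvdE)
  have xc: "x \<in> carrier L" using x mu_carrier by auto
  have "x [^] N = (x [^] k) [^] m" unfolding m using xc by (simp add: nat_pow_pow)
  then show "x \<in> muL N" using x unfolding muL_def by auto
qed

lemma muK_S: "muL K \<subseteq> SL - {\<zero>}"
  using mu_sub[of K "2 * K"] mu_nz[of K] Kpos unfolding S_eq by auto

lemma half:
  assumes g: "g \<in> SL - {\<zero>}"
  shows "g \<in> muL K \<longleftrightarrow> \<ominus> g \<notin> muL K"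
proof -
  have gc: "g \<in> carrier L" using g S_sub by auto
  have g2: "g [^] (2 * K) = \<one>" using g unfolding S_eq muL_def by auto
  define u where "u = g [^] K"
  have uc: "u \<in> carrier L" unfolding u_def using gc by simp
  have "u \<otimes> u = \<one>" unfolding u_def using gc g2 by (simp add: nat_pow_mult mult_2)
  then have "(u \<ominus> \<one>) \<otimes> (u \<oplus> \<one>) = \<zero>" using uc by algebra
  then have "u \<ominus> \<one> = \<zero> \<or> u \<oplus> \<one> = \<zero>" using uc by (simp add: integral_iff)
  then have u: "u = \<one> \<or> u = \<ominus> \<one>"
  proof
    assume "u \<ominus> \<one> = \<zero>" then show ?thesis using uc by (simp add: r_right_minus_eq)
  next
    assume "u \<oplus> \<one> = \<zero>" then have "\<ominus> \<one> = u" using uc by (intro add.inv_equality) auto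
    then show ?thesis by simp
  qed
  have nu: "(\<ominus> g) [^] K = \<ominus> u" unfolding u_def using Kodd gc by (simp add: neg_pow)
  show ?thesis
  proof (cases "u = \<one>")
    case True
    then show ?thesis using nu gc one_ne_neg unfolding muL_def u_def by auto
  next
    case False
    then have "u = \<ominus> \<one>" using u by simp
    then show ?thesis using nu gc False unfolding muL_def u_def by auto
  qed
qed

lemma cos_eq_image:
  assumes x: "x \<in> muL K"
  shows "cosL k x = (\<lambda>y. x \<otimes> y) ` muL k"
proof
  have xc: "x \<in> carrier L" and xK: "x [^] K = \<one>" using x unfolding muL_def by auto
  show "(\<lambda>y. x \<otimes> y) ` muL k \<subseteq> cosL k x"
    using xc unfolding muL_def cosL_def by (auto simp: nat_pow_distrib)
  show "cosL k x \<subseteq> (\<lambda>y. x \<otimes> y) ` muL k"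
  proof
    fix z assume z: "z \<in> cosL k x"
    then have zc: "z \<in> carrier L" and zk: "z [^] k = x [^] k" unfolding cosL_def by auto
    define w where "w = x [^] (K - 1) \<otimes> z"
    have wc: "w \<in> carrier L" unfolding w_def using xc zc by simp
    have xx: "x \<otimes> x [^] (K - 1) = \<one>"
      using xc xK Kpos nat_pow_Suc2[of x "K - 1"] by simp
    have "x \<otimes> w = z" unfolding w_def using xc zc xx by (simp add: m_assoc[symmetric])
    moreover have "w [^] k = \<one>"
    proof -
      have "w [^] k = (x [^] (K - 1)) [^] k \<otimes> z [^] k" unfolding w_def using xc zc by (simp add: nat_pow_distrib)
      also have "\<dots> = (x [^] (K - 1)) [^] k \<otimes> x [^] k" using zk by simp
      also have "\<dots> = (x [^] (K - 1) \<otimes> x) [^] k" using xc by (simp add: nat_pow_distrib)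
      also have "x [^] (K - 1) \<otimes> x = \<one>" using xx xc by (simp add: m_comm)
      finally show ?thesis by simp
    qed
    ultimately show "z \<in> (\<lambda>y. x \<otimes> y) ` muL k" using wc unfolding muL_def by auto
  qed
qed

lemma cos_sub:
  assumes x: "x \<in> muL K" and k: "k dvd K"
  shows "cosL k x \<subseteq> muL K"
proof
  fix z assume z: "z \<in> cosL k x"
  obtain m where m: "K = k * m" using k by (auto elim: dvdE)
  have xc: "x \<in> carrier L" and xK: "x [^] K = \<one>" using x unfolding muL_def by auto
  have zc: "z \<in> carrier L" and zk: "z [^] k = x [^] k" using z unfolding cosL_def by auto
  have "z [^] K = (z [^] k) [^] m" unfolding m using zc by (simp add: nat_pow_pow)
  also have "\<dots> = (x [^] k) [^] m" using zk by simp
  also have "\<dots> = x [^] K" unfolding m using xc by (simp add: nat_pow_pow)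
  finally show "z \<in> muL K" using zc xK unfolding muL_def by simp
qed

lemma sum_mu_zero:
  assumes k: "k dvd 2 * K" "k \<ge> 2"
  shows "finsum L (\<lambda>y. y) (muL k) = \<zero>"
proof (rule ccontr)
  let ?M = "muL k"
  let ?S = "finsum L (\<lambda>y. y) ?M"
  assume S0: "?S \<noteq> \<zero>"
  have fin: "finite ?M" and card: "card ?M = k" using mu_card[OF k(1)] k by auto
  obtain \<zeta> where z: "\<zeta> \<in> ?M" "\<zeta> \<noteq> \<one>"
  proof -
    have "\<not> ?M \<subseteq> {\<one>}" using card k card_mono[of "{\<one>}" ?M] by auto
    then show ?thesis using that by auto
  qed
  have zc: "\<zeta> \<in> carrier L" using z mu_carrier by auto
  have z0: "\<zeta> \<noteq> \<zero>" using z mu_nz k by auto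
  have inj: "inj_on (\<lambda>y. \<zeta> \<otimes> y) ?M"
    using m_lcancel[OF z0 zc] mu_carrier by (auto simp: inj_on_def)
  have img: "(\<lambda>y. \<zeta> \<otimes> y) ` ?M = ?M"
  proof (rule card_subset_eq[OF fin])
    show "(\<lambda>y. \<zeta> \<otimes> y) ` ?M \<subseteq> ?M" using mu_mult z by auto
    show "card ((\<lambda>y. \<zeta> \<otimes> y) ` ?M) = card ?M" using card_image[OF inj] .
  qed
  have Sc: "?S \<in> carrier L" using mu_carrier by (intro finsum_closed) auto
  have "?S = finsum L (\<lambda>y. y) ((\<lambda>y. \<zeta> \<otimes> y) ` ?M)" using img by simp
  also have "\<dots> = finsum L (\<lambda>y. \<zeta> \<otimes> y) ?M"
    using finsum_reindex[of "\<lambda>y. y" "\<lambda>y. \<zeta> \<otimes> y" ?M] inj img mu_carrier by auto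
  also have "\<dots> = \<zeta> \<otimes> ?S"
  proof -
    have "(\<lambda>y. y) \<in> muL k \<rightarrow> carrier L" using mu_carrier by auto
    from finsum_rdistr[OF fin zc this] show ?thesis by simp
  qed
  finally have "\<one> \<otimes> ?S = \<zeta> \<otimes> ?S" using Sc by simp
  then have "\<one> = \<zeta>" using m_rcancel[OF S0 Sc] zc by simp
  then show False using z by simp
qed

lemma block_props:
  assumes x: "x \<in> muL K" and k: "k dvd K" "k \<ge> 2"
  shows "cosL k x \<noteq> {}" "card (cosL k x) = k" "finsum L (\<lambda>y. y) (cosL k x) = \<zero>"
    "cosL k x \<subseteq> SL" "finite (cosL k x)"
proof -
  have xc: "x \<in> carrier L" using x mu_carrier by auto
  have x0: "x \<noteq> \<zero>" using x mu_nz Kpos by auto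
  have k2: "k dvd 2 * K" using k by simp
  have fin: "finite (muL k)" and card: "card (muL k) = k" using mu_card[OF k2] k by auto
  have inj: "inj_on (\<lambda>y. x \<otimes> y) (muL k)"
    using m_lcancel[OF x0 xc] mu_carrier by (auto simp: inj_on_def)
  show "cosL k x \<noteq> {}" unfolding cos_eq_image[OF x] using mu_one by auto
  show "card (cosL k x) = k" unfolding cos_eq_image[OF x] using card_image[OF inj] card by simp
  show "cosL k x \<subseteq> SL" using cos_sub[OF x k(1)] muK_S by auto
  show "finite (cosL k x)" unfolding cos_eq_image[OF x] using fin by simp
  have "finsum L (\<lambda>y. y) ((\<lambda>y. x \<otimes> y) ` muL k) = finsum L (\<lambda>y. x \<otimes> y) (muL k)"
    using finsum_reindex[of "\<lambda>y. y" "\<lambda>y. x \<otimes> y" "muL k"] inj xc mu_carrier by auto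
  also have "\<dots> = x \<otimes> finsum L (\<lambda>y. y) (muL k)"
  proof -
    have "(\<lambda>y. y) \<in> muL k \<rightarrow> carrier L" using mu_carrier by auto
    from finsum_rdistr[OF fin xc this] show ?thesis by simp
  qed
  also have "\<dots> = \<zero>" using sum_mu_zero[OF k2 k(2)] xc by simp
  finally show "finsum L (\<lambda>y. y) (cosL k x) = \<zero>" unfolding cos_eq_image[OF x] .
qed

lemma blocks_union: "k dvd K \<Longrightarrow> \<Union>(blocksL k) = muL K"
  unfolding blocksL_def using cos_sub unfolding cosL_def by (auto simp: muL_def) 

lemma blocks_disj:
  assumes "C \<in> blocksL k" "D \<in> blocksL k" "C \<noteq> D" shows "C \<inter> D = {}"
proof -
  obtain x y where C: "C = cosL k x" and D: "D = cosL k y" using assms unfolding blocksL_def by auto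
  show ?thesis
  proof (rule ccontr)
    assume "C \<inter> D \<noteq> {}"
    then obtain z where "z \<in> C" "z \<in> D" by auto
    then have "x [^] k = y [^] k" unfolding C D cosL_def by auto
    then have "C = D" unfolding C D cosL_def by simp
    then show False using assms by simp
  qed
qed

lemma blocks_orth:
  assumes C: "C \<in> blocksL k" and D: "D \<in> blocksL k'" and cop: "coprime k k'"
    and k: "k dvd K" "k \<ge> 2" and k': "k' dvd K" "k' \<ge> 2"
  shows "card (C \<inter> D) \<le> 1"
proof -
  obtain x y where x: "x \<in> muL K" and Cx: "C = cosL k x" and y: "y \<in> muL K" and Dy: "D = cosL k' y"
    using C D unfolding blocksL_def by auto
  have fin: "finite C" using block_props[OF x k] Cx by simp
  have xc: "x \<in> carrier L" and x0: "x \<noteq> \<zero>" using x mu_carrier mu_nz Kpos by auto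
  have eq: "z = w" if z: "z \<in> C \<inter> D" and w: "w \<in> C \<inter> D" for z w
  proof -
    have zc: "z \<in> carrier L" and wc: "w \<in> carrier L" using z w unfolding Cx cosL_def by auto
    have zk: "z [^] k = w [^] k" using z w unfolding Cx cosL_def by auto
    have zk': "z [^] k' = w [^] k'" using z w unfolding Dy cosL_def by auto
    have z0: "z \<noteq> \<zero>"
    proof
      assume "z = \<zero>"
      then have "x [^] k = \<zero>" using z k nat_pow_zero[of k] unfolding Cx cosL_def by auto
      then show False using pow_nz[OF xc x0] by simp
    qed
    obtain a b where ab: "k * a = k' * b + 1"
      using bezout_nat[of k k'] k cop by auto
    have "z [^] (k' * b) \<otimes> z = z [^] (k * a)" unfolding ab using zc by (simp add: nat_pow_Suc)
    also have "\<dots> = (z [^] k) [^] a" using zc by (simp add: nat_pow_pow)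
    also have "\<dots> = (w [^] k) [^] a" using zk by simp
    also have "\<dots> = w [^] (k * a)" using wc by (simp add: nat_pow_pow)
    also have "\<dots> = w [^] (k' * b) \<otimes> w" unfolding ab using wc by (simp add: nat_pow_Suc)
    also have "w [^] (k' * b) = z [^] (k' * b)" using zc wc zk' by (simp add: nat_pow_pow[symmetric])
    finally have "z [^] (k' * b) \<otimes> z = z [^] (k' * b) \<otimes> w" .
    then show "z = w" using m_lcancel[OF pow_nz[OF zc z0]] zc wc by simp
  qed
  show ?thesis using fin eq by (simp add: card_le_Suc0_iff_eq)
qed

end

context mohs
begin

lemma mohs_exists:
  fixes ks :: "nat list"
  assumes kdv: "\<forall>i<length ks. ks ! i dvd K \<and> ks ! i \<ge> 3"
    and cop: "\<forall>i<length ks. \<forall>j<length ks. i \<noteq> j \<longrightarrow> coprime (ks ! i) (ks ! j)"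
  shows "exists_MOHS K ks"
proof -
  obtain G :: "nat monoid" and \<phi> where G: "comm_group G" and cG: "carrier G = {0..<card SL}"
    and bij: "bij_betw \<phi> (carrier G) SL"
    and hom: "\<And>a b. a \<in> carrier G \<Longrightarrow> b \<in> carrier G \<Longrightarrow> \<phi> (a \<otimes>\<^bsub>G\<^esub> b) = \<phi> a \<oplus> \<phi> b"
    and one: "\<phi> \<one>\<^bsub>G\<^esub> = \<zero>"
    using transport_group[OF S_sub S_fin S_zero S_add S_neg] by blast
  interpret G: comm_group G by (rule G)
  have inv: "\<And>a. a \<in> carrier G \<Longrightarrow> \<phi> (inv\<^bsub>G\<^esub> a) = \<ominus> \<phi> a"
    and fp: "\<And>B. B \<subseteq> carrier G \<Longrightarrow> finite B \<Longrightarrow> \<phi> (finprod G (\<lambda>x. x) B) = (\<Oplus>x\<in>B. \<phi> x)"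
    using transport_facts[OF G bij S_sub hom one] by auto
  define \<psi> where "\<psi> = inv_into (carrier G) \<phi>"
  have bij\<psi>: "bij_betw \<psi> SL (carrier G)" unfolding \<psi>_def by (rule bij_betw_inv_into[OF bij])
  have \<phi>\<psi>: "\<And>s. s \<in> SL \<Longrightarrow> \<phi> (\<psi> s) = s" unfolding \<psi>_def using bij by (simp add: bij_betw_inv_into_right)
  have \<psi>\<phi>: "\<And>a. a \<in> carrier G \<Longrightarrow> \<psi> (\<phi> a) = a" unfolding \<psi>_def using bij by (simp add: bij_betw_inv_into_left)
  have \<phi>S: "\<And>a. a \<in> carrier G \<Longrightarrow> \<phi> a \<in> SL" using bij by (meson bij_betw_apply)
  have \<psi>G: "\<And>s. s \<in> SL \<Longrightarrow> \<psi> s \<in> carrier G" using bij\<psi> by (meson bij_betw_apply)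
  have inj\<psi>: "inj_on \<psi> SL" using bij\<psi> by (rule bij_betw_imp_inj_on)
  have inj\<phi>: "inj_on \<phi> (carrier G)" using bij by (rule bij_betw_imp_inj_on)
  have memT: "a \<in> \<psi> ` C \<longleftrightarrow> \<phi> a \<in> C" if a: "a \<in> carrier G" and C: "C \<subseteq> SL" for a C
  proof
    assume "a \<in> \<psi> ` C"
    then obtain c where "c \<in> C" "a = \<psi> c" by auto
    then show "\<phi> a \<in> C" using \<phi>\<psi> C by auto
  next
    assume "\<phi> a \<in> C"
    then have "\<psi> (\<phi> a) \<in> \<psi> ` C" by (rule imageI)
    then show "a \<in> \<psi> ` C" using \<psi>\<phi>[OF a] by simp
  qed
  have oneG: "\<one>\<^bsub>G\<^esub> = \<psi> \<zero>" using \<psi>\<phi>[OF G.one_closed] one by simp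
  have Tcard: "card (\<psi> ` C) = card C" if "C \<subseteq> SL" for C
    using inj\<psi> that by (meson card_image inj_on_subset)
  have Tint: "\<psi> ` C \<inter> \<psi> ` D = \<psi> ` (C \<inter> D)" if "C \<subseteq> SL" "D \<subseteq> SL" for C D
    using inj_on_image_Int[OF inj\<psi> that] by simp
  have Tsum: "finprod G (\<lambda>x. x) (\<psi> ` C) = \<one>\<^bsub>G\<^esub>"
    if C: "C \<subseteq> SL" "finite C" "finsum L (\<lambda>y. y) C = \<zero>" for C
  proof -
    have sub: "\<psi> ` C \<subseteq> carrier G" using C \<psi>G by auto
    have "\<phi> (finprod G (\<lambda>x. x) (\<psi> ` C)) = (\<Oplus>x\<in>\<psi> ` C. \<phi> x)" using fp[OF sub] C by simp
    also have "\<dots> = (\<Oplus>x\<in>C. \<phi> (\<psi> x))"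
    proof (rule finsum_reindex)
      show "\<phi> \<in> \<psi> ` C \<rightarrow> carrier L" using sub \<phi>S S_sub by auto
      show "inj_on \<psi> C" using inj\<psi> C inj_on_subset by blast
    qed
    also have "\<dots> = (\<Oplus>x\<in>C. x)" by (rule finsum_cong') (use C \<phi>\<psi> S_sub in auto)
    also have "\<dots> = \<zero>" using C by simp
    finally have "\<phi> (finprod G (\<lambda>x. x) (\<psi> ` C)) = \<phi> \<one>\<^bsub>G\<^esub>" using one by simp
    moreover have "finprod G (\<lambda>x. x) (\<psi> ` C) \<in> carrier G" by (rule G.finprod_closed) (use sub in auto)
    ultimately show ?thesis using inj\<phi> G.one_closed by (meson inj_onD)
  qed
  have blk: "C \<subseteq> SL \<and> finite C \<and> C \<noteq> {} \<and> card C = k \<and> finsum L (\<lambda>y. y) C = \<zero>"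
    if k: "k dvd K" "k \<ge> 2" and C: "C \<in> blocksL k" for k C
  proof -
    obtain x where x: "x \<in> muL K" and Cx: "C = cosL k x" using C unfolding blocksL_def by auto
    show ?thesis unfolding Cx using block_props[OF x k] by auto
  qed
  define V where "V = \<psi> ` muL K"
  define T where "T = (\<lambda>k. (\<lambda>C. \<psi> ` C) ` blocksL k)"
  define Ps where "Ps = map T ks"
  have muS: "muL K \<subseteq> SL" using muK_S by auto
  have halfG: "half_set G V"
    unfolding half_set_def
  proof (intro conjI ballI)
    show "V \<subseteq> carrier G - {\<one>\<^bsub>G\<^esub>}"
    proof
      fix v assume "v \<in> V"
      then obtain x where x: "x \<in> muL K" and v: "v = \<psi> x" unfolding V_def by auto
      have xS: "x \<in> SL" and x0: "x \<noteq> \<zero>" using x muK_S by auto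
      have "v \<noteq> \<psi> \<zero>" unfolding v using inj\<psi> xS S_zero x0 by (meson inj_onD)
      then show "v \<in> carrier G - {\<one>\<^bsub>G\<^esub>}" using \<psi>G xS v oneG by auto
    qed
  next
    fix g assume g: "g \<in> carrier G - {\<one>\<^bsub>G\<^esub>}"
    have gc: "g \<in> carrier G" using g by simp
    have "\<phi> g \<noteq> \<zero>"
    proof
      assume "\<phi> g = \<zero>"
      then have "g = \<psi> \<zero>" using \<psi>\<phi>[OF gc] by simp
      then show False using g oneG by simp
    qed
    then have gS: "\<phi> g \<in> SL - {\<zero>}" using \<phi>S[OF gc] by simp
    have "g \<in> V \<longleftrightarrow> \<phi> g \<in> muL K" unfolding V_def by (rule memT[OF gc muS])
    moreover have "inv\<^bsub>G\<^esub> g \<in> V \<longleftrightarrow> \<ominus> \<phi> g \<in> muL K"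
      unfolding V_def using memT[OF G.inv_closed[OF gc] muS] inv[OF gc] by simp
    ultimately show "g \<in> V \<longleftrightarrow> inv\<^bsub>G\<^esub> g \<notin> V" using half[OF gS] by simp
  qed
  have heff: "heffter_system G V k (T k)" if k: "k dvd K" "k \<ge> 3" for k
    unfolding heffter_system_def
  proof (intro conjI ballI impI)
    have "\<Union>(T k) = \<psi> ` \<Union>(blocksL k)" unfolding T_def by blast
    then show "\<Union>(T k) = V" unfolding V_def using blocks_union[OF k(1)] by simp
  next
    fix B assume "B \<in> T k"
    then obtain C where C: "C \<in> blocksL k" and B: "B = \<psi> ` C" unfolding T_def by auto
    have c: "C \<subseteq> SL" "finite C" "C \<noteq> {}" "card C = k" "finsum L (\<lambda>y. y) C = \<zero>"
      using blk[OF k(1) _ C] k by auto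
    show "B \<noteq> {}" using c B by simp
    show "card B = k" using Tcard[OF c(1)] c B by simp
    show "finprod G (\<lambda>x. x) B = \<one>\<^bsub>G\<^esub>" unfolding B by (rule Tsum[OF c(1,2,5)])
  next
    fix A B assume A: "A \<in> T k" and B: "B \<in> T k" and AB: "A \<noteq> B"
    obtain C where C: "C \<in> blocksL k" and AC: "A = \<psi> ` C" using A unfolding T_def by auto
    obtain D where D: "D \<in> blocksL k" and BD: "B = \<psi> ` D" using B unfolding T_def by auto
    have "C \<noteq> D" using AB AC BD by auto
    then have "C \<inter> D = {}" using blocks_disj[OF C D] by simp
    moreover have "C \<subseteq> SL" "D \<subseteq> SL" using blk[OF k(1) _ C] blk[OF k(1) _ D] k by auto
    ultimately show "A \<inter> B = {}" unfolding AC BD using Tint by simp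
  qed
  have orth: "orthogonal_systems (T k) (T k')"
    if k: "k dvd K" "k \<ge> 3" and k': "k' dvd K" "k' \<ge> 3" and c: "coprime k k'" for k k'
    unfolding orthogonal_systems_def
  proof (intro ballI)
    fix A B assume A: "A \<in> T k" and B: "B \<in> T k'"
    obtain C where C: "C \<in> blocksL k" and AC: "A = \<psi> ` C" using A unfolding T_def by auto
    obtain D where D: "D \<in> blocksL k'" and BD: "B = \<psi> ` D" using B unfolding T_def by auto
    have CS: "C \<subseteq> SL" using blk[OF k(1) _ C] k by auto
    have DS: "D \<subseteq> SL" using blk[OF k'(1) _ D] k' by auto
    have "A \<inter> B = \<psi> ` (C \<inter> D)" unfolding AC BD using Tint[OF CS DS] .
    moreover have "C \<inter> D \<subseteq> SL" using CS by auto
    ultimately have "card (A \<inter> B) = card (C \<inter> D)" using Tcard[of "C \<inter> D"] by simp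
    also have "\<dots> \<le> 1" using blocks_orth[OF C D c] k k' by simp
    finally show "card (A \<inter> B) \<le> 1" .
  qed
  show ?thesis
    unfolding exists_MOHS_def
  proof (intro exI conjI allI impI)
    show "comm_group G" by (rule G)
    show "finite (carrier G)" unfolding cG by simp
    show "order G = 2 * K + 1" unfolding order_def cG using S_card q by simp
    show "half_set G V" by (rule halfG)
    show "length Ps = length ks" unfolding Ps_def by simp
  next
    fix i assume i: "i < length ks"
    show "heffter_system G V (ks ! i) (Ps ! i)" unfolding Ps_def using heff kdv i by simp
  next
    fix i j assume i: "i < length ks" and j: "j < length ks" and ij: "i \<noteq> j"
    show "orthogonal_systems (Ps ! i) (Ps ! j)" unfolding Ps_def using orth kdv cop i j ij by simp
  qed
qed

end

lemma ring_hom_add_pow: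
  assumes h: "h \<in> ring_hom R S" and R: "ring R" and S: "ring S" and x: "x \<in> carrier R"
  shows "h (add_pow R (n::nat) x) = add_pow S n (h x)"
proof -
  interpret ring_hom_ring R S h using ring_hom_ringI2[OF R S h] .
  show ?thesis
  proof (induction n)
    case 0 then show ?case by simp
  next
    case (Suc n)
    then show ?case using x by (simp add: add.nat_pow_Suc)
  qed
qed

lemma (in residues) add_pow_one_res: "add_pow R (n::nat) \<one> = int n mod m"
proof (induction n)
  case 0 then show ?case by (simp add: res_zero_eq)
next
  case (Suc n)
  have "add_pow R (Suc n) \<one> = add_pow R n \<one> \<oplus> \<one>" by (simp add: add.nat_pow_Suc)
  also have "\<dots> = (int n mod m + 1) mod m" using Suc by (simp add: res_add_eq res_one_eq)
  also have "\<dots> = int (Suc n) mod m" by (subst mod_add_left_eq) (simp add: add.commute)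
  finally show ?case .
qed

theorem theorem1p13:
  fixes ks :: "nat list"
  assumes "ks \<noteq> []"
    and "\<forall>i < length ks. odd (ks ! i) \<and> ks ! i \<ge> 3"
    and "\<forall>i < length ks. \<forall>j < length ks. i \<noteq> j \<longrightarrow> coprime (ks ! i) (ks ! j)"
    and "\<exists>p n. Factorial_Ring.prime (p::nat) \<and> n \<ge> 1 \<and> 2 * prod_list ks + 1 = p ^ n"
  shows "exists_MOHS ((2 * prod_list ks + 1 - 1) div 2) ks"
proof -
  obtain p n where p: "Factorial_Ring.prime (p::nat)" and qn: "2 * prod_list ks + 1 = p ^ n"
    using assms(4) by blast
  define K where "K = prod_list ks"
  have odds: "\<forall>x\<in>set ks. odd x" using assms(2) by (auto simp: in_set_conv_nth)
  have Kodd: "odd K" unfolding K_def using prod_list_odd[OF odds] .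
  then have Kpos: "K > 0" by (cases K) auto
  interpret Zp: residues_prime p "residue_ring (int p)" by unfold_locales (rule p)
  have Zf: "field (residue_ring (int p))" by (rule Zp.is_field)
  define L where "L = field.alg_closure (residue_ring (int p))"
  have clos: "algebraic_closure L (Zp.indexed_const ` carrier (residue_ring (int p)))"
    and homL: "Zp.indexed_const \<in> ring_hom (residue_ring (int p)) L"
    unfolding L_def using field.alg_closureE[OF Zf] by auto
  interpret A: algebraic_closure L "Zp.indexed_const ` carrier (residue_ring (int p))" by (rule clos)
  have "add_pow L p \<one>\<^bsub>L\<^esub> = Zp.indexed_const (add_pow (residue_ring (int p)) p \<one>\<^bsub>residue_ring (int p)\<^esub>)"
    using ring_hom_add_pow[OF homL Zp.ring_axioms A.ring_axioms Zp.one_closed] homL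
    by (simp add: ring_hom_one)
  also have "add_pow (residue_ring (int p)) p \<one>\<^bsub>residue_ring (int p)\<^esub> = \<zero>\<^bsub>residue_ring (int p)\<^esub>"
    using Zp.add_pow_one_res[of p] by (simp add: Zp.res_zero_eq)
  also have "Zp.indexed_const \<zero>\<^bsub>residue_ring (int p)\<^esub> = \<zero>\<^bsub>L\<^esub>"
    using ring_hom_zero[OF homL Zp.ring_axioms A.ring_axioms] .
  finally have char: "add_pow L p \<one>\<^bsub>L\<^esub> = \<zero>\<^bsub>L\<^esub>" .
  interpret M: mohs L p n K
    by unfold_locales (use p char qn Kodd Kpos K_def in auto)
  have kdv: "\<forall>i<length ks. ks ! i dvd K \<and> ks ! i \<ge> 3"
    using assms(2) dvd_prod_list_mem unfolding K_def by (auto simp: nth_mem)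
  have "exists_MOHS K ks" by (rule M.mohs_exists[OF kdv assms(3)])
  then show ?thesis unfolding K_def by simp
qed

end
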